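(* Let $G=(V,E)$ be a connected undirected graph with labeled nodes $1,\dots,n_l$ ($1\le n_l<n$), edge costs $d_e>0$, and let $p$ be an unlabeled node. For every $\lambda\ge0$, the oriented flow subgraph $G_p(\lambda)$ is a directed acyclic graph.
   Context: Orient each edge arbitrarily; let $A$ be the $n\times m$ signed incidence matrix ($A_{ie}=+1$, $A_{je}=-1$ for $e$ oriented from $i$ to $j$) and $A_u$ its rows indexed by unlabeled nodes $n_l+1,\dots,n$. Let $\vec b_p\in\mathbb R^{n-n_l}$ be zero except $-1$ at the entry of $p$. For $\lambda\ge0$ let $\vec x$ be the unique minimizer of $\frac12\sum_{e=1}^m d_e(x_e^2+\lambda|x_e|)$ subject to $A_u\vec x=\vec b_p$. The flow subgraph $G_p(\lambda)$ consists of all edges $e$ with $x_e\neq0$ and the nodes incident to them; it is oriented by keeping the chosen orientation of $e$ if $x_e>0$ and reversing it if $x_e<0$ (so that the flow is positive on every edge of $G_p(\lambda)$). *)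

theory Defs
  imports Main "HOL-Library.Extended_Real" Complex_Main
begin

text \<open>Nodes are 1..n, edges are indexed 0..<m. Edge e is oriented from src e to tgt e.\<close>

definition incidence :: "(nat \<Rightarrow> nat) \<Rightarrow> (nat \<Rightarrow> nat) \<Rightarrow> nat \<Rightarrow> nat \<Rightarrow> real" where
  "incidence src tgt i e = (if i = src e then 1 else if i = tgt e then -1 else 0)"

definition objective :: "nat \<Rightarrow> (nat \<Rightarrow> real) \<Rightarrow> real \<Rightarrow> (nat \<Rightarrow> real) \<Rightarrow> real" where
  "objective m d lam x = (1/2) * (\<Sum>e<m. d e * ((x e)^2 + lam * \<bar>x e\<bar>))"

text \<open>Constraint A_u x = b_p: rows of unlabeled nodes n_l+1..n.\<close>
definition feasible :: "nat \<Rightarrow> nat \<Rightarrow> nat \<Rightarrow> (nat \<Rightarrow> nat) \<Rightarrow> (nat \<Rightarrow> nat) \<Rightarrow> nat \<Rightarrow> (nat \<Rightarrow> real) \<Rightarrow> bool" where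
  "feasible n nl m src tgt p x \<longleftrightarrow>
     (\<forall>i \<in> {nl+1..n}. (\<Sum>e<m. incidence src tgt i e * x e) = (if i = p then -1 else 0))"

definition is_minimizer :: "nat \<Rightarrow> nat \<Rightarrow> nat \<Rightarrow> (nat \<Rightarrow> nat) \<Rightarrow> (nat \<Rightarrow> nat) \<Rightarrow> (nat \<Rightarrow> real)
    \<Rightarrow> real \<Rightarrow> nat \<Rightarrow> (nat \<Rightarrow> real) \<Rightarrow> bool" where
  "is_minimizer n nl m src tgt d lam p x \<longleftrightarrow>
     feasible n nl m src tgt p x \<and>
     (\<forall>y. feasible n nl m src tgt p y \<longrightarrow> objective m d lam x \<le> objective m d lam y)"

definition flow_arcs :: "nat \<Rightarrow> (nat \<Rightarrow> nat) \<Rightarrow> (nat \<Rightarrow> nat) \<Rightarrow> (nat \<Rightarrow> real) \<Rightarrow> (nat \<times> nat) set" where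
  "flow_arcs m src tgt x =
     {(src e, tgt e) | e. e < m \<and> x e > 0} \<union> {(tgt e, src e) | e. e < m \<and> x e < 0}"

definition undirected_edges :: "nat \<Rightarrow> (nat \<Rightarrow> nat) \<Rightarrow> (nat \<Rightarrow> nat) \<Rightarrow> (nat \<times> nat) set" where
  "undirected_edges m src tgt = {(src e, tgt e) | e. e < m} \<union> {(tgt e, src e) | e. e < m}"

end

theory Submission
  imports Defs
begin

definition good_w :: "nat \<Rightarrow> (nat \<Rightarrow> nat) \<Rightarrow> (nat \<Rightarrow> nat) \<Rightarrow> (nat \<Rightarrow> real) \<Rightarrow> nat \<Rightarrow> nat \<Rightarrow> (nat \<Rightarrow> real) \<Rightarrow> bool" where
  "good_w m src tgt x a b w \<longleftrightarrow>
     (\<forall>e. w e \<noteq> 0 \<longrightarrow> e < m \<and> w e * x e > 0) \<and> (\<exists>e. w e \<noteq> 0) \<and>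
     (\<forall>i. (\<Sum>e<m. incidence src tgt i e * w e) = (if i = a then 1 else 0) - (if i = b then 1 else 0))"

lemma arc_w:
  assumes nol: "\<forall>e<m. src e \<noteq> tgt e"
    and uv: "(u, v) \<in> flow_arcs m src tgt x"
  shows "\<exists>w. good_w m src tgt x u v w"
proof -
  from uv obtain e where e: "e < m" "x e \<noteq> 0"
    and dir: "(x e > 0 \<and> u = src e \<and> v = tgt e) \<or> (x e < 0 \<and> u = tgt e \<and> v = src e)"
    unfolding flow_arcs_def by auto
  define w where "w = (\<lambda>e'. if e' = e then sgn (x e) else 0)"
  have s: "(\<Sum>e'<m. incidence src tgt i e' * w e') = incidence src tgt i e * sgn (x e)" for i
  proof -
    have "(\<Sum>e'<m. incidence src tgt i e' * w e') = (\<Sum>e'<m. if e' = e then incidence src tgt i e * sgn (x e) else 0)"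
      by (rule sum.cong) (auto simp: w_def)
    also have "\<dots> = incidence src tgt i e * sgn (x e)" using e by simp
    finally show ?thesis .
  qed
  have "good_w m src tgt x u v w"
    unfolding good_w_def
  proof (intro conjI)
    show "\<forall>e'. w e' \<noteq> 0 \<longrightarrow> e' < m \<and> w e' * x e' > 0" using e by (auto simp: w_def sgn_if)
  next
    show "\<exists>e. w e \<noteq> 0" using e by (auto simp: w_def sgn_if)
  next
    show "\<forall>i. (\<Sum>e<m. incidence src tgt i e * w e) = (if i = u then 1 else 0) - (if i = v then 1 else 0)"
      unfolding s using dir nol e by (auto simp: incidence_def sgn_if)
  qed
  then show ?thesis by blast
qed

lemma add_w:
  assumes "good_w m src tgt x a b w1" "good_w m src tgt x b c w2"
  shows "good_w m src tgt x a c (\<lambda>e. w1 e + w2 e)"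
  unfolding good_w_def
proof (intro conjI)
  show "\<forall>e. w1 e + w2 e \<noteq> 0 \<longrightarrow> e < m \<and> (w1 e + w2 e) * x e > 0"
  proof (intro allI impI)
  fix e assume ne: "w1 e + w2 e \<noteq> 0"
  have h1: "w1 e \<noteq> 0 \<longrightarrow> e < m \<and> w1 e * x e > 0" "w2 e \<noteq> 0 \<longrightarrow> e < m \<and> w2 e * x e > 0"
    using assms unfolding good_w_def by blast+
  have "w1 e \<noteq> 0 \<or> w2 e \<noteq> 0" using ne by auto
  then show "e < m \<and> (w1 e + w2 e) * x e > 0"
    using h1 by (auto simp: distrib_right)
  qed
next
  obtain e where "w1 e \<noteq> 0" "w1 e * x e > 0"
    using assms unfolding good_w_def by blast
  moreover have "w2 e * x e \<ge> 0"
    using assms(2) unfolding good_w_def by (metis less_eq_real_def mult_zero_left)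
  ultimately have "(w1 e + w2 e) * x e > 0" by (simp add: distrib_right)
  then show "\<exists>e. w1 e + w2 e \<noteq> 0" by (metis mult_zero_left less_irrefl)
next
  show "\<forall>i. (\<Sum>e<m. incidence src tgt i e * (w1 e + w2 e)) = (if i = a then 1 else 0) - (if i = c then 1 else 0)"
  proof
  fix i
  have "(\<Sum>e<m. incidence src tgt i e * (w1 e + w2 e)) =
     (\<Sum>e<m. incidence src tgt i e * w1 e) + (\<Sum>e<m. incidence src tgt i e * w2 e)"
    by (simp add: distrib_left sum.distrib)
  then show "(\<Sum>e<m. incidence src tgt i e * (w1 e + w2 e)) = (if i = a then 1 else 0) - (if i = c then 1 else 0)"
    using assms unfolding good_w_def by simp
  qed
qed

lemma path_w:
  assumes nol: "\<forall>e<m. src e \<noteq> tgt e"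
    and "(a, b) \<in> (flow_arcs m src tgt x)\<^sup>+"
  shows "\<exists>w. good_w m src tgt x a b w"
  using assms(2)
proof (induction rule: trancl_induct)
  case (base y) then show ?case using arc_w[OF nol] by blast
next
  case (step y z)
  then obtain w1 where "good_w m src tgt x a y w1" by blast
  moreover obtain w2 where "good_w m src tgt x y z w2" using arc_w[OF nol step(2)] by blast
  ultimately show ?case using add_w by blast
qed

lemma pointwise:
  fixes xe we eps :: real
  assumes "xe * we > 0" "eps > 0" "eps * \<bar>we\<bar> \<le> \<bar>xe\<bar>"
  shows "\<bar>xe - eps * we\<bar> < \<bar>xe\<bar>" "(xe - eps * we)^2 < xe^2"
proof -
  have "\<bar>xe - eps * we\<bar> = \<bar>xe\<bar> - eps * \<bar>we\<bar>"
    using assms by (cases "xe > 0") (auto simp: abs_if zero_less_mult_iff)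
  moreover have "eps * \<bar>we\<bar> > 0" using assms by (auto simp: zero_less_mult_iff)
  ultimately show 1: "\<bar>xe - eps * we\<bar> < \<bar>xe\<bar>" by simp
  show "(xe - eps * we)^2 < xe^2"
    using 1 by (metis abs_ge_zero abs_power2 power2_abs power_strict_mono zero_less_numeral)
qed

theorem proposition3:
  fixes n nl m p :: nat and src tgt :: "nat \<Rightarrow> nat" and d :: "nat \<Rightarrow> real"
    and lam :: real and x :: "nat \<Rightarrow> real"
  assumes nl: "1 \<le> nl" "nl < n"
    and endpoints: "\<forall>e<m. src e \<in> {1..n} \<and> tgt e \<in> {1..n}"
    and no_loops: "\<forall>e<m. src e \<noteq> tgt e"
    and simple: "\<forall>e<m. \<forall>e'<m. e \<noteq> e' \<longrightarrow> {src e, tgt e} \<noteq> {src e', tgt e'}"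
    and connected: "\<forall>u\<in>{1..n}. \<forall>v\<in>{1..n}. (u, v) \<in> (undirected_edges m src tgt)\<^sup>*"
    and costs: "\<forall>e<m. d e > 0"
    and p: "p \<in> {nl+1..n}"
    and lam: "lam \<ge> 0"
    and xmin: "is_minimizer n nl m src tgt d lam p x"
  shows "acyclic (flow_arcs m src tgt x)"
proof (rule acyclicI, rule allI, rule notI)
  fix v assume "(v, v) \<in> (flow_arcs m src tgt x)\<^sup>+"
  then obtain w where w: "good_w m src tgt x v v w" using path_w[OF no_loops] by blast
  have wsup: "\<And>e. w e \<noteq> 0 \<Longrightarrow> e < m \<and> w e * x e > 0" using w unfolding good_w_def by blast
  obtain e0 where e0: "w e0 \<noteq> 0" using w unfolding good_w_def by blast
  have div0: "\<And>i. (\<Sum>e<m. incidence src tgt i e * w e) = 0" using w unfolding good_w_def by simp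
  define S where "S = {e. e < m \<and> w e \<noteq> 0}"
  have Sfin: "finite S" and Sne: "S \<noteq> {}" using e0 wsup[OF e0] unfolding S_def by auto
  define eps where "eps = Min ((\<lambda>e. \<bar>x e\<bar> / \<bar>w e\<bar>) ` S)"
  have epspos: "eps > 0"
    unfolding eps_def using Sfin Sne
  proof (subst Min_gr_iff, simp_all, intro ballI)
    fix e assume "e \<in> S"
    then have "w e * x e > 0" using wsup by (auto simp: S_def)
    then have "x e \<noteq> 0" "w e \<noteq> 0" by auto
    then show "0 < \<bar>x e\<bar> / \<bar>w e\<bar>" by simp
  qed
  have epsle: "eps * \<bar>w e\<bar> \<le> \<bar>x e\<bar>" if "e \<in> S" for e
  proof -
    have "eps \<le> \<bar>x e\<bar> / \<bar>w e\<bar>" unfolding eps_def using Sfin that by simp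
    moreover have "\<bar>w e\<bar> > 0" using that by (auto simp: S_def)
    ultimately show ?thesis by (simp add: pos_le_divide_eq)
  qed
  define y where "y = (\<lambda>e. x e - eps * w e)"
  have feas_x: "feasible n nl m src tgt p x" using xmin unfolding is_minimizer_def by blast
  have feas_y: "feasible n nl m src tgt p y"
    unfolding feasible_def
  proof
    fix i assume i: "i \<in> {nl+1..n}"
    have "(\<Sum>e<m. incidence src tgt i e * y e) =
      (\<Sum>e<m. incidence src tgt i e * x e) - eps * (\<Sum>e<m. incidence src tgt i e * w e)"
      by (simp add: y_def right_diff_distrib sum_subtractf sum_distrib_left algebra_simps)
    then show "(\<Sum>e<m. incidence src tgt i e * y e) = (if i = p then -1 else 0)"
      using feas_x i div0 unfolding feasible_def by simp
  qed
  have le: "d e * ((y e)^2 + lam * \<bar>y e\<bar>) \<le> d e * ((x e)^2 + lam * \<bar>x e\<bar>)" if "e \<in> {..<m}" for e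
  proof (cases "w e = 0")
    case True then show ?thesis by (simp add: y_def)
  next
    case False
    then have eS: "e \<in> S" using that by (auto simp: S_def)
    have "x e * w e > 0" using wsup[OF False] by (simp add: mult.commute)
    from pointwise[OF this epspos epsle[OF eS]]
    have "\<bar>y e\<bar> < \<bar>x e\<bar>" "(y e)^2 < (x e)^2" unfolding y_def by auto
    then have "(y e)^2 + lam * \<bar>y e\<bar> \<le> (x e)^2 + lam * \<bar>x e\<bar>"
      using lam by (smt (verit) mult_left_mono)
    then show ?thesis using costs that by (simp add: mult_left_mono)
  qed
  have lt: "d e0 * ((y e0)^2 + lam * \<bar>y e0\<bar>) < d e0 * ((x e0)^2 + lam * \<bar>x e0\<bar>)"
  proof -
    have eS: "e0 \<in> S" using e0 wsup[OF e0] by (auto simp: S_def)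
    have "x e0 * w e0 > 0" using wsup[OF e0] by (simp add: mult.commute)
    from pointwise[OF this epspos epsle[OF eS]]
    have "\<bar>y e0\<bar> < \<bar>x e0\<bar>" "(y e0)^2 < (x e0)^2" unfolding y_def by auto
    then have "(y e0)^2 + lam * \<bar>y e0\<bar> < (x e0)^2 + lam * \<bar>x e0\<bar>"
      using lam by (smt (verit) mult_left_mono)
    then show ?thesis using costs wsup[OF e0] by simp
  qed
  have "objective m d lam y < objective m d lam x"
    unfolding objective_def
    using sum_strict_mono_ex1[of "{..<m}" "\<lambda>e. d e * ((y e)^2 + lam * \<bar>y e\<bar>)" "\<lambda>e. d e * ((x e)^2 + lam * \<bar>x e\<bar>)"] le lt wsup[OF e0] by auto
  moreover have "objective m d lam x \<le> objective m d lam y"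
    using xmin feas_y unfolding is_minimizer_def by blast
  ultimately show False by simp
qed

end
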